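(* Let $n,m,p$ be positive integers and $A\in\mathbb{R}^{n\times n}$, $B\in\mathbb{R}^{n\times m}$, $C\in\mathbb{R}^{p\times n}$, $D\in\mathbb{R}^{p\times m}$ with $DD^T$ positive definite and $BD^T=0$. Assume $(A,B)$ is reachable and $(A,C)$ is observable, and let $N\ge n$ be an integer. Then there exists $\phi_N$ with $0<\phi_N<\tilde\phi_N$ such that for every symmetric $\bar\Phi\in\mathbb{R}^{nN\times nN}$ with $0\le\bar\Phi\le\phi_NI_{nN}$, the matrices $\Omega_{\bar\Phi}$ and $W_{\bar\Phi}$ are positive definite.
   Context: $\le$ is the Loewner order on symmetric matrices; $\sigma_1(M)$ is the largest singular value. Reachability of $(A,B)$ means $\mathrm{rank}[B\ AB\ \cdots\ A^{n-1}B]=n$; observability of $(A,C)$ means $(A^T,C^T)$ is reachable. Block matrices: $\mathcal{R}_N=[B\ AB\ \cdots\ A^{N-1}B]$; $\mathcal{O}_N$ the block column with blocks (top to bottom) $CA^{N-1},\dots,CA,C$; $\mathcal{O}_N^R$ the block column with blocks $A^{N-1},\dots,A,I_n$; $\mathcal{D}_N=I_N\otimes D$; $\mathcal{H}_N$ the $N\times N$ block matrix with $(i,j)$ block $CA^{j-i-1}B$ for $j>i$ and $0$ otherwise; $\mathcal{L}_N$ the $N\times N$ block matrix with $(i,j)$ block $A^{j-i-1}B$ for $j>i$ and $0$ otherwise. Define $\mathcal{J}_N=\mathcal{O}_N^R-\mathcal{L}_N\mathcal{H}_N^T(\mathcal{D}_N\mathcal{D}_N^T+\mathcal{H}_N\mathcal{H}_N^T)^{-1}\mathcal{O}_N$,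 $\Omega_N=\mathcal{O}_N^T(\mathcal{D}_N\mathcal{D}_N^T+\mathcal{H}_N\mathcal{H}_N^T)^{-1}\mathcal{O}_N$, $M_N=\mathcal{L}_N(I_{Nm}+\mathcal{H}_N^T(\mathcal{D}_N\mathcal{D}_N^T)^{-1}\mathcal{H}_N)^{-1}\mathcal{L}_N^T$, and $\tilde\phi_N=1/\sigma_1(M_N)$ (with $1/0=+\infty$). For symmetric $\bar\Phi$ with $0\le\bar\Phi<\tilde\phi_NI_{nN}$: $S_{\bar\Phi}^{-1}:=-(I_{nN}-\bar\Phi M_N)^{-1}\bar\Phi$ (this equals $(-\bar\Phi^{-1}+M_N)^{-1}$ when $\bar\Phi$ is invertible), $\Omega_{\bar\Phi}=\Omega_N+\mathcal{J}_N^TS_{\bar\Phi}^{-1}\mathcal{J}_N$, $\mathcal{Q}_{\bar\Phi}=(I_{Nm}+\mathcal{H}_N^T(\mathcal{D}_N\mathcal{D}_N^T)^{-1}\mathcal{H}_N-\mathcal{L}_N^T\bar\Phi\mathcal{L}_N)^{-1}$, and $W_{\bar\Phi}=\mathcal{R}_N\mathcal{Q}_{\bar\Phi}\mathcal{R}_N^T$. *)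

theory Defs
  imports "Jordan_Normal_Form.Matrix" "Jordan_Normal_Form.DL_Rank" "Jordan_Normal_Form.Char_Poly"
    "HOL-Library.Extended_Real"
begin

(* Matrices are Jordan_Normal_Form matrices 'real mat' with explicit dimensions.
   Block indices are 0-based: block (i,j), 0 <= i,j < N. *)

definition block_mat :: "nat \<Rightarrow> nat \<Rightarrow> nat \<Rightarrow> nat \<Rightarrow> (nat \<Rightarrow> nat \<Rightarrow> real mat) \<Rightarrow> real mat" where
  "block_mat r c nr nc f = mat (r * nr) (c * nc) (\<lambda>(i, j). f (i div r) (j div c) $$ (i mod r, j mod c))"

(* matrix inverse (used only for invertible square matrices) *)
definition inv_mat :: "real mat \<Rightarrow> real mat" where
  "inv_mat X = (SOME Y. Y \<in> carrier_mat (dim_row X) (dim_row X) \<and> inverts_mat X Y \<and> inverts_mat Y X)"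

definition sym_mat :: "real mat \<Rightarrow> bool" where
  "sym_mat X \<longleftrightarrow> square_mat X \<and> transpose_mat X = X"

definition psd_mat :: "real mat \<Rightarrow> bool" where
  "psd_mat X \<longleftrightarrow> sym_mat X \<and> (\<forall>x \<in> carrier_vec (dim_row X). x \<bullet> (X *\<^sub>v x) \<ge> 0)"

definition pd_mat :: "real mat \<Rightarrow> bool" where
  "pd_mat X \<longleftrightarrow> sym_mat X \<and> (\<forall>x \<in> carrier_vec (dim_row X). x \<noteq> 0\<^sub>v (dim_row X) \<longrightarrow> x \<bullet> (X *\<^sub>v x) > 0)"

definition sigma1 :: "real mat \<Rightarrow> real" where
  "sigma1 M = sqrt (Max {k. eigenvalue (transpose_mat M * M) k})"

definition reachable :: "nat \<Rightarrow> real mat \<Rightarrow> real mat \<Rightarrow> bool" where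
  "reachable n A B \<longleftrightarrow>
     vec_space.rank n (block_mat n (dim_col B) 1 n (\<lambda>_ j. (A ^\<^sub>m j) * B)) = n"

definition observable :: "nat \<Rightarrow> real mat \<Rightarrow> real mat \<Rightarrow> bool" where
  "observable n A C \<longleftrightarrow> reachable n (transpose_mat A) (transpose_mat C)"

context
  fixes n m p N :: nat and A B C D :: "real mat"
begin

definition RN :: "real mat" where
  "RN = block_mat n m 1 N (\<lambda>_ j. (A ^\<^sub>m j) * B)"

definition ON :: "real mat" where
  "ON = block_mat p n N 1 (\<lambda>i _. C * (A ^\<^sub>m (N - 1 - i)))"

definition ONR :: "real mat" where
  "ONR = block_mat n n N 1 (\<lambda>i _. A ^\<^sub>m (N - 1 - i))"

definition DN :: "real mat" where
  "DN = block_mat p m N N (\<lambda>i j. if i = j then D else 0\<^sub>m p m)"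

definition HN :: "real mat" where
  "HN = block_mat p m N N (\<lambda>i j. if j > i then C * (A ^\<^sub>m (j - i - 1)) * B else 0\<^sub>m p m)"

definition LN :: "real mat" where
  "LN = block_mat n m N N (\<lambda>i j. if j > i then (A ^\<^sub>m (j - i - 1)) * B else 0\<^sub>m n m)"

definition JN :: "real mat" where
  "JN = ONR - LN * transpose_mat HN
          * inv_mat (DN * transpose_mat DN + HN * transpose_mat HN) * ON"

definition OmegaN :: "real mat" where
  "OmegaN = transpose_mat ON * inv_mat (DN * transpose_mat DN + HN * transpose_mat HN) * ON"

definition MN :: "real mat" where
  "MN = LN * inv_mat (1\<^sub>m (N * m) + transpose_mat HN * inv_mat (DN * transpose_mat DN) * HN)
          * transpose_mat LN"

definition phi_tilde :: ereal where
  "phi_tilde = (if sigma1 MN = 0 then \<infinity> else ereal (1 / sigma1 MN))"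

definition S_inv :: "real mat \<Rightarrow> real mat" where
  "S_inv Phi = - (inv_mat (1\<^sub>m (n * N) - Phi * MN) * Phi)"

definition Omega_Phi :: "real mat \<Rightarrow> real mat" where
  "Omega_Phi Phi = OmegaN + transpose_mat JN * S_inv Phi * JN"

definition Q_Phi :: "real mat \<Rightarrow> real mat" where
  "Q_Phi Phi = inv_mat (1\<^sub>m (N * m) + transpose_mat HN * inv_mat (DN * transpose_mat DN) * HN
                        - transpose_mat LN * Phi * LN)"

definition W_Phi :: "real mat \<Rightarrow> real mat" where
  "W_Phi Phi = RN * Q_Phi Phi * transpose_mat RN"

end

end

theory Submission
  imports Defs
begin


lemma sq_nonneg_vec: "0 \<le> (x::real vec) \<bullet> x"
  unfolding scalar_prod_def by (auto intro: sum_nonneg)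

lemma sq_zero_vec: assumes "x \<in> carrier_vec k" "(x::real vec) \<bullet> x = 0" shows "x = 0\<^sub>v k"
proof (rule eq_vecI)
  have "\<forall>i\<in>{0..<dim_vec x}. x $ i * x $ i = 0"
    using assms(2) unfolding scalar_prod_def
    by (subst sum_nonneg_eq_0_iff[symmetric]) auto
  then show "\<And>i. i < dim_vec (0\<^sub>v k) \<Longrightarrow> x $ i = 0\<^sub>v k $ i" using assms(1) by auto
  show "dim_vec x = dim_vec (0\<^sub>v k)" using assms(1) by auto
qed

lemma quad_disc:
  fixes a b c :: real
  assumes "\<And>t. 0 \<le> a + 2*t*b + t^2*c" "0 \<le> c"
  shows "b^2 \<le> a*c"
proof (cases "c = 0")
  case True
  have "b = 0"
  proof (rule ccontr)
    assume "b \<noteq> 0"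
    have "0 \<le> a + 2*(-(\<bar>a\<bar>+1)/(2*b))*b" using assms(1)[of "-(\<bar>a\<bar>+1)/(2*b)"] True by simp
    also have "\<dots> = a - (\<bar>a\<bar>+1)" using \<open>b \<noteq> 0\<close> by (simp add: field_simps)
    finally show False by linarith
  qed
  then show ?thesis using True by simp
next
  case False
  then have c: "c > 0" using assms(2) by simp
  have "0 \<le> a + 2*(-b/c)*b + (-b/c)^2*c" by (rule assms(1))
  also have "\<dots> = (a*c - b^2)/c" using c by (simp add: field_simps power2_eq_square)
  finally show ?thesis using c by (simp add: divide_nonneg_pos zero_le_divide_iff)
qed

lemma sym_bil:
  fixes P :: "real mat"
  assumes P: "P \<in> carrier_mat k k" and sym: "transpose_mat P = P"
    and u: "u \<in> carrier_vec k" and v: "v \<in> carrier_vec k"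
  shows "v \<bullet> (P *\<^sub>v u) = u \<bullet> (P *\<^sub>v v)"
proof -
  have "(transpose_mat P *\<^sub>v u) \<bullet> v = u \<bullet> (P *\<^sub>v v)"
    by (rule transpose_vec_mult_scalar[OF P v u])
  then show ?thesis using sym comm_scalar_prod[of v k "P *\<^sub>v u"] P u v by simp
qed

lemma psd_cs:
  fixes P :: "real mat"
  assumes P: "P \<in> carrier_mat k k" and sym: "transpose_mat P = P"
    and psd: "\<forall>x\<in>carrier_vec k. 0 \<le> x \<bullet> (P *\<^sub>v x)"
    and u: "u \<in> carrier_vec k" and v: "v \<in> carrier_vec k"
  shows "(u \<bullet> (P *\<^sub>v v))^2 \<le> (u \<bullet> (P *\<^sub>v u)) * (v \<bullet> (P *\<^sub>v v))"
proof (rule quad_disc)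
  show "0 \<le> v \<bullet> (P *\<^sub>v v)" using psd v by auto
  fix t :: real
  have w: "u + t \<cdot>\<^sub>v v \<in> carrier_vec k" using u v by auto
  have Pu: "P *\<^sub>v u \<in> carrier_vec k" and Pv: "P *\<^sub>v v \<in> carrier_vec k" using P u v by auto
  have "P *\<^sub>v (u + t \<cdot>\<^sub>v v) = P *\<^sub>v u + t \<cdot>\<^sub>v (P *\<^sub>v v)"
    using P u v by (simp add: mult_add_distrib_mat_vec mult_mat_vec)
  then have "(u + t \<cdot>\<^sub>v v) \<bullet> (P *\<^sub>v (u + t \<cdot>\<^sub>v v))
     = u \<bullet> (P *\<^sub>v u) + t * (u \<bullet> (P *\<^sub>v v)) + t * (v \<bullet> (P *\<^sub>v u)) + t*t*(v \<bullet> (P *\<^sub>v v))"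
    using u v Pu Pv
    by (simp add: add_scalar_prod_distrib[of _ k] scalar_prod_add_distrib[of _ k] algebra_simps)
  also have "\<dots> = u \<bullet> (P *\<^sub>v u) + 2 * t * (u \<bullet> (P *\<^sub>v v)) + t^2*(v \<bullet> (P *\<^sub>v v))"
    using sym_bil[OF P sym u v] by (simp add: power2_eq_square algebra_simps)
  finally show "0 \<le> u \<bullet> (P *\<^sub>v u) + 2 * t * (u \<bullet> (P *\<^sub>v v)) + t\<^sup>2 * (v \<bullet> (P *\<^sub>v v))"
    using psd w by metis
qed


lemma vec_cs: fixes u v :: "real vec"
  assumes u: "u \<in> carrier_vec k" and v: "v \<in> carrier_vec k"
  shows "(u \<bullet> v)^2 \<le> (u \<bullet> u) * (v \<bullet> v)"
proof -
  have "(u \<bullet> (1\<^sub>m k *\<^sub>v v))^2 \<le> (u \<bullet> (1\<^sub>m k *\<^sub>v u)) * (v \<bullet> (1\<^sub>m k *\<^sub>v v))"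
    by (rule psd_cs[OF one_carrier_mat transpose_one _ u v]) (auto simp: sq_nonneg_vec)
  then show ?thesis using u v by simp
qed

definition fr :: "real mat \<Rightarrow> real" where
  "fr M = (\<Sum>i<dim_row M. row M i \<bullet> row M i)"

lemma fr_nonneg: "0 \<le> fr M"
  unfolding fr_def by (auto intro: sum_nonneg simp: sq_nonneg_vec)

lemma fr_bound: fixes M :: "real mat"
  assumes v: "v \<in> carrier_vec (dim_col M)"
  shows "(M *\<^sub>v v) \<bullet> (M *\<^sub>v v) \<le> fr M * (v \<bullet> v)"
proof -
  have "(M *\<^sub>v v) \<bullet> (M *\<^sub>v v) = (\<Sum>i<dim_row M. (row M i \<bullet> v)^2)"
    unfolding scalar_prod_def[of "M *\<^sub>v v"] by (auto simp: power2_eq_square lessThan_atLeast0)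
  also have "\<dots> \<le> (\<Sum>i<dim_row M. (row M i \<bullet> row M i) * (v \<bullet> v))"
    by (rule sum_mono, rule vec_cs[of _ "dim_col M"]) (use v in auto)
  also have "\<dots> = fr M * (v \<bullet> v)" unfolding fr_def by (simp add: sum_distrib_right)
  finally show ?thesis .
qed

lemma psd_sq_bound: fixes P :: "real mat"
  assumes P: "P \<in> carrier_mat k k" and sym: "transpose_mat P = P"
    and psd: "\<forall>x\<in>carrier_vec k. 0 \<le> x \<bullet> (P *\<^sub>v x)"
    and K: "\<forall>x\<in>carrier_vec k. x \<bullet> (P *\<^sub>v x) \<le> K * (x \<bullet> x)" and K0: "0 \<le> K"
    and w: "w \<in> carrier_vec k"
  shows "(P *\<^sub>v w) \<bullet> (P *\<^sub>v w) \<le> K * (w \<bullet> (P *\<^sub>v w))"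
proof -
  define u where "u = P *\<^sub>v w"
  have u: "u \<in> carrier_vec k" using P w u_def by auto
  have cs: "(u \<bullet> (P *\<^sub>v w))^2 \<le> (u \<bullet> (P *\<^sub>v u)) * (w \<bullet> (P *\<^sub>v w))"
    by (rule psd_cs[OF P sym psd u w])
  have q: "0 \<le> w \<bullet> (P *\<^sub>v w)" using psd w by auto
  have s: "0 \<le> u \<bullet> u" by (rule sq_nonneg_vec)
  have "(u \<bullet> u)^2 \<le> (K * (u \<bullet> u)) * (w \<bullet> (P *\<^sub>v w))"
    using cs u_def mult_right_mono[OF bspec[OF K u] q] by simp
  then have "(u \<bullet> u) * (u \<bullet> u) \<le> (u \<bullet> u) * (K * (w \<bullet> (P *\<^sub>v w)))"
    by (simp add: power2_eq_square algebra_simps)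
  then have "u \<bullet> u \<le> K * (w \<bullet> (P *\<^sub>v w)) \<or> u \<bullet> u = 0"
    using s by (metis less_eq_real_def mult_le_cancel_left_pos)
  then show ?thesis using K0 q u_def by auto
qed

lemma sum_sq_bound: fixes a b :: "real vec"
  assumes a: "a \<in> carrier_vec k" and b: "b \<in> carrier_vec k"
  shows "(a + b) \<bullet> (a + b) \<le> 2 * (a \<bullet> a) + 2 * (b \<bullet> b)"
proof -
  have ab: "a \<bullet> b = b \<bullet> a" using comm_scalar_prod[OF a b] .
  have e1: "(a + b) \<bullet> (a + b) = a \<bullet> a + 2 * (a \<bullet> b) + b \<bullet> b"
    using a b ab by (simp add: add_scalar_prod_distrib[of _ k] scalar_prod_add_distrib[of _ k])
  have e2: "(a - b) \<bullet> (a - b) = a \<bullet> a - 2 * (a \<bullet> b) + b \<bullet> b"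
    using a b ab by (simp add: minus_scalar_prod_distrib[of _ k] scalar_prod_minus_distrib[of _ k])
  show ?thesis using e1 e2 sq_nonneg_vec[of "a - b"] by linarith
qed

lemma mat_vec_zero[simp]: "A \<in> carrier_mat r c \<Longrightarrow> A *\<^sub>v 0\<^sub>v c = (0\<^sub>v r :: real vec)"
  by (rule eq_vecI) (auto simp: row_def)

lemma inv_mat_props: fixes X :: "real mat"
  assumes X: "X \<in> carrier_mat k k"
    and ker: "\<And>v. v \<in> carrier_vec k \<Longrightarrow> X *\<^sub>v v = 0\<^sub>v k \<Longrightarrow> v = 0\<^sub>v k"
  shows "inv_mat X \<in> carrier_mat k k \<and> X * inv_mat X = 1\<^sub>m k \<and> inv_mat X * X = 1\<^sub>m k"
proof -
  have "det X \<noteq> 0" using det_0_iff_vec_prod_zero[OF X] ker by auto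
  from det_non_zero_imp_unit[OF X this, of undefined]
  obtain Y where Y: "Y \<in> carrier_mat k k" "Y * X = 1\<^sub>m k" "X * Y = 1\<^sub>m k"
    unfolding Units_def ring_mat_def by auto
  have ex: "\<exists>Y. Y \<in> carrier_mat (dim_row X) (dim_row X) \<and> inverts_mat X Y \<and> inverts_mat Y X"
    using Y X unfolding inverts_mat_def by auto
  from someI_ex[OF ex] have "inv_mat X \<in> carrier_mat k k \<and> inverts_mat X (inv_mat X) \<and> inverts_mat (inv_mat X) X"
    unfolding inv_mat_def using X by auto
  then show ?thesis unfolding inverts_mat_def using X by auto
qed

lemma inv_mat_unique: fixes X Y :: "real mat"
  assumes X: "X \<in> carrier_mat k k" and Y: "Y \<in> carrier_mat k k" and XY: "X * Y = 1\<^sub>m k"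
  shows "inv_mat X = Y"
proof -
  have YX: "Y * X = 1\<^sub>m k" by (rule mat_mult_left_right_inverse[OF X Y XY])
  have ker: "v = 0\<^sub>v k" if v: "v \<in> carrier_vec k" "X *\<^sub>v v = 0\<^sub>v k" for v
  proof -
    have "v = (Y * X) *\<^sub>v v" using YX v by simp
    also have "\<dots> = Y *\<^sub>v (X *\<^sub>v v)" using X Y v by simp
    finally show ?thesis using v Y by simp
  qed
  from inv_mat_props[OF X ker] have I: "inv_mat X \<in> carrier_mat k k" "inv_mat X * X = 1\<^sub>m k" by auto
  have "inv_mat X = inv_mat X * (X * Y)" using I XY by simp
  also have "\<dots> = (inv_mat X * X) * Y" by (rule assoc_mult_mat[OF I(1) X Y, symmetric])
  also have "\<dots> = Y" using I Y by (simp only: I(2)) simp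
  finally show ?thesis .
qed

lemma inv_mat_transpose: fixes X :: "real mat"
  assumes X: "X \<in> carrier_mat k k"
    and ker: "\<And>v. v \<in> carrier_vec k \<Longrightarrow> X *\<^sub>v v = 0\<^sub>v k \<Longrightarrow> v = 0\<^sub>v k"
  shows "transpose_mat (inv_mat X) = inv_mat (transpose_mat X)"
proof -
  from inv_mat_props[OF X ker] have I: "inv_mat X \<in> carrier_mat k k" "inv_mat X * X = 1\<^sub>m k" by auto
  have "transpose_mat X * transpose_mat (inv_mat X) = transpose_mat (inv_mat X * X)"
    using transpose_mult[OF I(1) X] by simp
  also have "\<dots> = 1\<^sub>m k" using I by simp
  finally show ?thesis using inv_mat_unique[of "transpose_mat X" k "transpose_mat (inv_mat X)"] X I by simp
qed


lemma pd_kernel: fixes P :: "real mat"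
  assumes P: "P \<in> carrier_mat k k"
    and pd: "\<forall>x\<in>carrier_vec k. x \<noteq> 0\<^sub>v k \<longrightarrow> 0 < x \<bullet> (P *\<^sub>v x)"
    and v: "v \<in> carrier_vec k" and z: "P *\<^sub>v v = 0\<^sub>v k"
  shows "v = 0\<^sub>v k"
  using pd v z by force

lemma pd_inv: fixes P :: "real mat"
  assumes P: "P \<in> carrier_mat k k" and sym: "transpose_mat P = P"
    and pd: "\<forall>x\<in>carrier_vec k. x \<noteq> 0\<^sub>v k \<longrightarrow> 0 < x \<bullet> (P *\<^sub>v x)"
  shows "inv_mat P \<in> carrier_mat k k" "transpose_mat (inv_mat P) = inv_mat P"
    "\<forall>x\<in>carrier_vec k. x \<noteq> 0\<^sub>v k \<longrightarrow> 0 < x \<bullet> (inv_mat P *\<^sub>v x)"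
    "P * inv_mat P = 1\<^sub>m k" "inv_mat P * P = 1\<^sub>m k"
proof -
  note ker = pd_kernel[OF P pd]
  note I = inv_mat_props[OF P ker]
  show "inv_mat P \<in> carrier_mat k k" "P * inv_mat P = 1\<^sub>m k" "inv_mat P * P = 1\<^sub>m k" using I by auto
  show "transpose_mat (inv_mat P) = inv_mat P" using inv_mat_transpose[OF P ker] sym by simp
  show "\<forall>x\<in>carrier_vec k. x \<noteq> 0\<^sub>v k \<longrightarrow> 0 < x \<bullet> (inv_mat P *\<^sub>v x)"
  proof (intro ballI impI)
    fix x :: "real vec" assume x: "x \<in> carrier_vec k" "x \<noteq> 0\<^sub>v k"
    define y where "y = inv_mat P *\<^sub>v x"
    have y: "y \<in> carrier_vec k" using I x y_def by auto
    have xy: "x = P *\<^sub>v y" unfolding y_def using I x P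
      by (metis assoc_mult_mat_vec one_mult_mat_vec)
    have "y \<noteq> 0\<^sub>v k" using xy x P by auto
    then have "0 < y \<bullet> (P *\<^sub>v y)" using pd y by auto
    also have "y \<bullet> (P *\<^sub>v y) = x \<bullet> (inv_mat P *\<^sub>v x)"
    proof -
      have "x \<bullet> (inv_mat P *\<^sub>v x) = x \<bullet> y" by (simp add: y_def)
      also have "\<dots> = (P *\<^sub>v y) \<bullet> y" using xy by simp
      also have "\<dots> = y \<bullet> (P *\<^sub>v y)" using comm_scalar_prod[OF y, of "P *\<^sub>v y"] P y by simp
      finally show ?thesis by simp
    qed
    finally show "0 < x \<bullet> (inv_mat P *\<^sub>v x)" .
  qed
qed

lemma real_sqrt_free: fixes t s F :: real
  assumes "t^2 \<le> F * s^2" "0 \<le> s" "0 \<le> F"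
  shows "t \<le> (F + 1) * s"
proof (rule ccontr)
  assume "\<not> ?thesis"
  then have h: "(F+1)*s < t" by simp
  have "0 \<le> (F+1)*s" using assms by simp
  then have "((F+1)*s)^2 < t^2" using h by (simp add: power_strict_mono)
  moreover have "F * s^2 \<le> ((F+1)*s)^2"
    using assms by (simp add: power2_eq_square algebra_simps mult_nonneg_nonneg add_nonneg_nonneg)
  ultimately show False using assms by linarith
qed

lemma pd_lower: fixes P :: "real mat"
  assumes P: "P \<in> carrier_mat k k" and sym: "transpose_mat P = P"
    and pd: "\<forall>x\<in>carrier_vec k. x \<noteq> 0\<^sub>v k \<longrightarrow> 0 < x \<bullet> (P *\<^sub>v x)"
  shows "\<exists>\<mu>>0. \<forall>x\<in>carrier_vec k. \<mu> * (x \<bullet> x) \<le> x \<bullet> (P *\<^sub>v x)"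
proof -
  note I = pd_inv[OF P sym pd]
  have psd: "\<forall>x\<in>carrier_vec k. 0 \<le> x \<bullet> (P *\<^sub>v x)"
  proof
    fix x :: "real vec" assume x: "x \<in> carrier_vec k"
    show "0 \<le> x \<bullet> (P *\<^sub>v x)" using pd x by (cases "x = 0\<^sub>v k") (auto intro: less_imp_le simp: mat_vec_zero[OF P])
  qed
  define K where "K = fr P + 1"
  have K0: "0 \<le> K" using fr_nonneg K_def by (simp add: add_nonneg_nonneg)
  have Kb: "\<forall>x\<in>carrier_vec k. x \<bullet> (P *\<^sub>v x) \<le> K * (x \<bullet> x)"
  proof
    fix x :: "real vec" assume x: "x \<in> carrier_vec k"
    have Px: "P *\<^sub>v x \<in> carrier_vec k" using P x by auto
    have "(x \<bullet> (P *\<^sub>v x))^2 \<le> (x \<bullet> x) * ((P *\<^sub>v x) \<bullet> (P *\<^sub>v x))" by (rule vec_cs[OF x Px])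
    also have "\<dots> \<le> (x \<bullet> x) * (fr P * (x \<bullet> x))"
      by (rule mult_left_mono[OF fr_bound sq_nonneg_vec]) (use P x in auto)
    also have "\<dots> = fr P * (x \<bullet> x)^2" by (simp add: power2_eq_square)
    finally show "x \<bullet> (P *\<^sub>v x) \<le> K * (x \<bullet> x)"
      unfolding K_def by (rule real_sqrt_free[OF _ sq_nonneg_vec fr_nonneg])
  qed
  define F where "F = fr (inv_mat P)"
  have F0: "0 \<le> F" using fr_nonneg F_def by simp
  define \<mu> where "\<mu> = 1 / (F * K + 1)"
  have FK: "0 \<le> F * K" using F0 K0 by simp
  have mu0: "\<mu> > 0" unfolding \<mu>_def using FK by simp
  show ?thesis
  proof (intro exI[of _ \<mu>] conjI mu0 ballI)
    fix x :: "real vec" assume x: "x \<in> carrier_vec k"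
    have Px: "P *\<^sub>v x \<in> carrier_vec k" using P x by auto
    have q: "0 \<le> x \<bullet> (P *\<^sub>v x)" using psd x by auto
    have xe: "x = inv_mat P *\<^sub>v (P *\<^sub>v x)" using I P x
      by (metis assoc_mult_mat_vec one_mult_mat_vec)
    have "x \<bullet> x \<le> F * ((P *\<^sub>v x) \<bullet> (P *\<^sub>v x))"
      unfolding F_def by (subst xe, subst (2) xe, rule fr_bound) (use I Px in auto)
    also have "\<dots> \<le> F * (K * (x \<bullet> (P *\<^sub>v x)))"
      by (rule mult_left_mono[OF psd_sq_bound[OF P sym psd Kb K0 x] F0])
    also have "\<dots> \<le> (F * K + 1) * (x \<bullet> (P *\<^sub>v x))" using q by (simp add: algebra_simps)
    finally have "x \<bullet> x \<le> (F * K + 1) * (x \<bullet> (P *\<^sub>v x))" .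
    then show "\<mu> * (x \<bullet> x) \<le> x \<bullet> (P *\<^sub>v x)" unfolding \<mu>_def using FK
      by (simp add: field_simps)
  qed
qed

lemma pd_matI: fixes X :: "real mat"
  assumes X: "X \<in> carrier_mat k k" and sym: "transpose_mat X = X"
    and pd: "\<forall>x\<in>carrier_vec k. x \<noteq> 0\<^sub>v k \<longrightarrow> 0 < x \<bullet> (X *\<^sub>v x)"
  shows "pd_mat X"
  unfolding pd_mat_def sym_mat_def using X sym pd by auto

lemma quad_congr: fixes R X :: "real mat"
  assumes R: "R \<in> carrier_mat r k" and X: "X \<in> carrier_mat k k" and x: "x \<in> carrier_vec r"
  shows "x \<bullet> ((R * X * transpose_mat R) *\<^sub>v x) = (transpose_mat R *\<^sub>v x) \<bullet> (X *\<^sub>v (transpose_mat R *\<^sub>v x))"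
proof -
  have y: "transpose_mat R *\<^sub>v x \<in> carrier_vec k" using R x by auto
  have "(R * X * transpose_mat R) *\<^sub>v x = (R * X) *\<^sub>v (transpose_mat R *\<^sub>v x)"
    by (rule assoc_mult_mat_vec) (use R X x in auto)
  also have "\<dots> = R *\<^sub>v (X *\<^sub>v (transpose_mat R *\<^sub>v x))"
    by (rule assoc_mult_mat_vec) (use R X x in auto)
  finally have e: "(R * X * transpose_mat R) *\<^sub>v x = R *\<^sub>v (X *\<^sub>v (transpose_mat R *\<^sub>v x))" .
  show ?thesis unfolding e using transpose_vec_mult_scalar[OF R _ x, of "X *\<^sub>v (transpose_mat R *\<^sub>v x)"] R X y by simp
qed

lemma transpose_congr: fixes R X :: "real mat"
  assumes R: "R \<in> carrier_mat r k" and X: "X \<in> carrier_mat k k"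
  shows "transpose_mat (R * X * transpose_mat R) = R * transpose_mat X * transpose_mat R"
proof -
  have RX: "R * X \<in> carrier_mat r k" using R X by auto
  have "transpose_mat (R * X * transpose_mat R) = transpose_mat (transpose_mat R) * transpose_mat (R * X)"
    by (rule transpose_mult[OF RX]) (use R in auto)
  also have "\<dots> = R * (transpose_mat X * transpose_mat R)" using transpose_mult[OF R X] by simp
  also have "\<dots> = R * transpose_mat X * transpose_mat R"
    by (rule assoc_mult_mat[symmetric]) (use R X in auto)
  finally show ?thesis .
qed


lemma rank_full_kernel: fixes M :: "real mat"
  assumes M: "M \<in> carrier_mat k c" and rk: "vec_space.rank k M = k"
    and x: "x \<in> carrier_vec k" and z: "\<And>j. j < c \<Longrightarrow> col M j \<bullet> x = 0"
  shows "x = 0\<^sub>v k"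
proof -
  interpret V: vec_space "TYPE(real)" k .
  have li0: "V.lin_indpt {}" by (rule V.finite_lin_indpt2) auto
  obtain S where S: "maximal S (\<lambda>T. T \<subseteq> set (cols M) \<and> V.lin_indpt T)"
    using maximal_exists[of "(\<lambda>T. T \<subseteq> set (cols M) \<and> V.lin_indpt T)" "card (set (cols M))" "{}"]
      li0 by (auto intro: card_mono dest: finite_subset)
  have cardS: "card S = k" using V.rank_card_indpt[OF M S] rk by simp
  have Ssub: "S \<subseteq> set (cols M)" and li: "V.lin_indpt S" using S unfolding maximal_def by auto
  have Scar: "S \<subseteq> carrier_vec k" using Ssub M cols_dim by blast
  have finS: "finite S" using Ssub finite_subset by blast
  have "V.basis S"
    by (rule V.dim_li_is_basis) (use V.fin_dim finS Scar li cardS V.dim_is_n in auto)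
  then have span: "V.span S = carrier_vec k" unfolding V.basis_def by auto
  have "x \<in> V.orthogonal_complement S"
    unfolding V.orthogonal_complement_def
  proof (intro CollectI conjI ballI)
    show "x \<in> carrier_vec k" by (rule x)
    fix y assume "y \<in> S"
    then obtain j where j: "j < length (cols M)" "y = cols M ! j" using Ssub
      by (metis in_set_conv_nth subsetD)
    then have j: "j < c" "y = col M j" using M by auto
    have "y \<in> carrier_vec k" using j M by auto
    then show "x \<bullet> y = 0" using z[OF j(1)] j(2) comm_scalar_prod[OF x] by metis
  qed
  then have "x \<in> V.orthogonal_complement (V.span S)" using V.in_orthogonal_complement_span[OF Scar] by simp
  moreover have "x \<in> V.span S" using span x by simp
  ultimately have "x \<bullet> x = 0" unfolding V.orthogonal_complement_def by auto
  then show ?thesis using sq_zero_vec[OF x] by simp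
qed


lemma pow_mat_Suc_left: fixes A :: "real mat"
  assumes A: "A \<in> carrier_mat n n" shows "A ^\<^sub>m Suc k = A * A ^\<^sub>m k"
proof (induct k)
  case 0 then show ?case using A by simp
next
  case (Suc k)
  have "A ^\<^sub>m Suc (Suc k) = (A * A ^\<^sub>m k) * A" using Suc by simp
  also have "\<dots> = A * (A ^\<^sub>m k * A)" using A by (simp add: assoc_mult_mat[of _ n n _ n _ n])
  finally show ?case by simp
qed

lemma transpose_pow: fixes A :: "real mat"
  assumes A: "A \<in> carrier_mat n n" shows "transpose_mat (A ^\<^sub>m k) = transpose_mat A ^\<^sub>m k"
proof (induct k)
  case 0 then show ?case using A by simp
next
  case (Suc k)
  have "transpose_mat (A ^\<^sub>m Suc k) = transpose_mat (A ^\<^sub>m k * A)" by simp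
  also have "\<dots> = transpose_mat A * transpose_mat (A ^\<^sub>m k)" using A by (simp add: transpose_mult[of _ n n _ n])
  also have "\<dots> = transpose_mat A ^\<^sub>m Suc k" using Suc pow_mat_Suc_left[of "transpose_mat A" n k] A by simp
  finally show ?case .
qed

definition slice :: "nat \<Rightarrow> nat \<Rightarrow> real vec \<Rightarrow> real vec" where
  "slice c j x = vec c (\<lambda>b. x $ (j*c+b))"

lemma slice_carrier[simp]: "slice c j x \<in> carrier_vec c" unfolding slice_def by simp

lemma sum_group: fixes g :: "nat \<Rightarrow> real"
  shows "(\<Sum>t<c*nc. g t) = (\<Sum>j<nc. \<Sum>b<c. g (j*c+b))"
proof -
  have "(\<Sum>t<c*nc. g t) = (\<Sum>j<nc. sum g {j*c..<j*c+c})"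
    using sum.nat_group[of g c nc] by (simp add: mult.commute)
  also have "\<dots> = (\<Sum>j<nc. \<Sum>b<c. g (j*c+b))"
  proof (rule sum.cong[OF refl])
    fix j
    show "sum g {j*c..<j*c+c} = (\<Sum>b<c. g (j*c+b))"
      using sum.shift_bounds_nat_ivl[of g 0 "j*c" c] by (simp add: lessThan_atLeast0 add.commute)
  qed
  finally show ?thesis .
qed

lemma block_mult_vec:
  assumes f: "\<And>i j. i < nr \<Longrightarrow> j < nc \<Longrightarrow> f i j \<in> carrier_mat r c"
    and x: "x \<in> carrier_vec (c*nc)" and i: "i < nr" and a: "a < r"
  shows "(block_mat r c nr nc f *\<^sub>v x) $ (i*r + a) = (\<Sum>j<nc. (f i j *\<^sub>v slice c j x) $ a)"
proof -
  have r0: "r > 0" using a by simp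
  have "i*r + a < (i+1)*r" using a by simp
  also have "\<dots> \<le> nr * r" using i by (intro mult_le_mono1) simp
  finally have ia: "i*r + a < r*nr" by (simp add: mult.commute)
  have dv: "(i*r+a) div r = i" "(i*r+a) mod r = a" using a r0 by auto
  have "(block_mat r c nr nc f *\<^sub>v x) $ (i*r + a) = (\<Sum>t<c*nc. f i (t div c) $$ (a, t mod c) * x $ t)"
    unfolding block_mat_def using ia x dv
    by (auto simp: scalar_prod_def row_def lessThan_atLeast0 intro!: sum.cong)
  also have "\<dots> = (\<Sum>j<nc. \<Sum>b<c. f i ((j*c+b) div c) $$ (a, (j*c+b) mod c) * x $ (j*c+b))"
    by (rule sum_group)
  also have "\<dots> = (\<Sum>j<nc. \<Sum>b<c. f i j $$ (a, b) * x $ (j*c+b))"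
    by (intro sum.cong refl) auto
  also have "\<dots> = (\<Sum>j<nc. (f i j *\<^sub>v slice c j x) $ a)"
  proof (intro sum.cong refl)
    fix j assume j: "j \<in> {..<nc}"
    have F: "f i j \<in> carrier_mat r c" using f i j by auto
    show "(\<Sum>b<c. f i j $$ (a, b) * x $ (j*c+b)) = (f i j *\<^sub>v slice c j x) $ a"
      using F a by (auto simp: scalar_prod_def slice_def row_def lessThan_atLeast0 intro!: sum.cong)
  qed
  finally show ?thesis .
qed

lemma block_transpose:
  assumes f: "\<And>i j. i < nr \<Longrightarrow> j < nc \<Longrightarrow> f i j \<in> carrier_mat r c" and r0: "r > 0" and c0: "c > 0"
  shows "transpose_mat (block_mat r c nr nc f) = block_mat c r nc nr (\<lambda>j i. transpose_mat (f i j))"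
proof (rule eq_matI)
  show "dim_row (transpose_mat (block_mat r c nr nc f)) = dim_row (block_mat c r nc nr (\<lambda>j i. transpose_mat (f i j)))"
    "dim_col (transpose_mat (block_mat r c nr nc f)) = dim_col (block_mat c r nc nr (\<lambda>j i. transpose_mat (f i j)))"
    unfolding block_mat_def by auto
  fix s t assume s: "s < dim_row (block_mat c r nc nr (\<lambda>j i. transpose_mat (f i j)))"
    and t: "t < dim_col (block_mat c r nc nr (\<lambda>j i. transpose_mat (f i j)))"
  have s': "s < c*nc" and t': "t < r*nr" using s t unfolding block_mat_def by auto
  have "s div c < nc" using less_mult_imp_div_less[of s nc c] s' by (simp add: mult.commute)
  moreover have "t div r < nr" using less_mult_imp_div_less[of t nr r] t' by (simp add: mult.commute)
  ultimately have F: "f (t div r) (s div c) \<in> carrier_mat r c" using f by auto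
  have "s mod c < c" "t mod r < r" using r0 c0 by auto
  then show "transpose_mat (block_mat r c nr nc f) $$ (s, t) = block_mat c r nc nr (\<lambda>j i. transpose_mat (f i j)) $$ (s, t)"
    unfolding block_mat_def using s' t' F by auto
qed


lemma gram_quad: fixes R :: "real mat"
  assumes R: "R \<in> carrier_mat r k" and x: "x \<in> carrier_vec r"
  shows "x \<bullet> ((R * transpose_mat R) *\<^sub>v x) = (transpose_mat R *\<^sub>v x) \<bullet> (transpose_mat R *\<^sub>v x)"
proof -
  have "(R * transpose_mat R) *\<^sub>v x = R *\<^sub>v (transpose_mat R *\<^sub>v x)"
    by (rule assoc_mult_mat_vec) (use R x in auto)
  then show ?thesis using transpose_vec_mult_scalar[OF R _ x, of "transpose_mat R *\<^sub>v x"] R x by simp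
qed

lemma quad_add: fixes P Q :: "real mat"
  assumes P: "P \<in> carrier_mat k k" and Q: "Q \<in> carrier_mat k k" and x: "x \<in> carrier_vec k"
  shows "x \<bullet> ((P + Q) *\<^sub>v x) = x \<bullet> (P *\<^sub>v x) + x \<bullet> (Q *\<^sub>v x)"
  using P Q x by (simp add: add_mult_distrib_mat_vec[OF P Q x] scalar_prod_add_distrib[of _ k])

lemma quad_minus: fixes P Q :: "real mat"
  assumes P: "P \<in> carrier_mat k k" and Q: "Q \<in> carrier_mat k k" and x: "x \<in> carrier_vec k"
  shows "x \<bullet> ((P - Q) *\<^sub>v x) = x \<bullet> (P *\<^sub>v x) - x \<bullet> (Q *\<^sub>v x)"
  using P Q x by (simp add: minus_mult_distrib_mat_vec[OF P Q x] scalar_prod_minus_distrib[of _ k])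

lemma slice_zero_imp:
  assumes x: "x \<in> carrier_vec (p*N)" and p0: "p > 0"
    and z: "\<And>j. j < N \<Longrightarrow> slice p j x = 0\<^sub>v p"
  shows "x = 0\<^sub>v (p*N)"
proof (rule eq_vecI)
  show "dim_vec x = dim_vec (0\<^sub>v (p*N))" using x by simp
  fix t assume "t < dim_vec (0\<^sub>v (p * N))"
  then have t: "t < p*N" by simp
  have j: "t div p < N" using less_mult_imp_div_less[of t N p] t by (simp add: mult.commute)
  have b: "t mod p < p" using p0 by simp
  have "x $ t = slice p (t div p) x $ (t mod p)" unfolding slice_def using b
    by (simp add: mult.commute)
  also have "\<dots> = 0" using z[OF j] b by simp
  finally show "x $ t = 0\<^sub>v (p*N) $ t" using t by simp
qed

lemma slice0: "x \<in> carrier_vec c \<Longrightarrow> slice c 0 x = x"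
  unfolding slice_def by (rule eq_vecI) auto

lemma index_decomp: fixes t c nc :: nat assumes "t < c*nc"
  shows "t = (t div c)*c + t mod c" "t div c < nc" "t mod c < c"
  using assms less_mult_imp_div_less[of t nc c]
  by (auto simp: mult.commute) (metis mult_is_0 not_less_zero mod_less_divisor neq0_conv)

lemma idx_bound: fixes j nc b c :: nat assumes "j < nc" "b < c" shows "j*c + b < c*nc"
proof -
  have "j*c + b < (j+1)*c" using assms by simp
  also have "\<dots> \<le> nc*c" using assms by (intro mult_le_mono1) simp
  finally show ?thesis by (simp add: mult.commute)
qed

lemma colblock:
  assumes F: "\<And>i. i < nr \<Longrightarrow> F i \<in> carrier_mat r c" and x: "x \<in> carrier_vec c"
    and i: "i < nr" and a: "a < r"
  shows "(block_mat r c nr 1 (\<lambda>i _. F i) *\<^sub>v x) $ (i*r+a) = (F i *\<^sub>v x) $ a"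
proof -
  have "(block_mat r c nr 1 (\<lambda>i _. F i) *\<^sub>v x) $ (i*r+a) = (\<Sum>j<1. (F i *\<^sub>v slice c j x) $ a)"
    by (rule block_mult_vec) (use F x i a in auto)
  also have "\<dots> = (F i *\<^sub>v x) $ a" using slice0[OF x] by simp
  finally show ?thesis .
qed

lemma rowblock_T:
  assumes F: "\<And>j. j < nc \<Longrightarrow> F j \<in> carrier_mat r c" and r0: "r > 0" and c0: "c > 0"
    and x: "x \<in> carrier_vec r" and j: "j < nc" and b: "b < c"
  shows "(transpose_mat (block_mat r c 1 nc (\<lambda>_ j. F j)) *\<^sub>v x) $ (j*c+b) = (transpose_mat (F j) *\<^sub>v x) $ b"
proof -
  have T: "transpose_mat (block_mat r c 1 nc (\<lambda>_ j. F j)) = block_mat c r nc 1 (\<lambda>j _. transpose_mat (F j))"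
    by (rule block_transpose) (use F r0 c0 in auto)
  show ?thesis unfolding T by (rule colblock) (use F x j b in auto)
qed

lemma col_dot: fixes M :: "real mat" assumes "t < dim_col M"
  shows "col M t \<bullet> x = (transpose_mat M *\<^sub>v x) $ t"
  using assms by simp

context
  fixes n m p N :: nat and A B C D :: "real mat"
  assumes n0: "n > 0" and m0: "m > 0" and p0: "p > 0"
    and A: "A \<in> carrier_mat n n" and B: "B \<in> carrier_mat n m" and C: "C \<in> carrier_mat p n"
    and D: "D \<in> carrier_mat p m"
    and DD: "pd_mat (D * transpose_mat D)"
    and reach: "reachable n A B" and obs: "observable n A C" and Nn: "N \<ge> n"
begin

lemma N0: "N > 0" using n0 Nn by simp

lemma carriers:
  "DN m p N D \<in> carrier_mat (p*N) (m*N)"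
  "HN m p N A B C \<in> carrier_mat (p*N) (m*N)"
  "LN n m N A B \<in> carrier_mat (n*N) (m*N)"
  "ON n p N A C \<in> carrier_mat (p*N) n"
  "ONR n N A \<in> carrier_mat (n*N) n"
  "RN n m N A B \<in> carrier_mat n (m*N)"
  unfolding DN_def HN_def LN_def ON_def ONR_def RN_def block_mat_def by auto

lemma DN_kernel:
  assumes x: "x \<in> carrier_vec (p*N)" and z: "transpose_mat (DN m p N D) *\<^sub>v x = 0\<^sub>v (m*N)"
  shows "x = 0\<^sub>v (p*N)"
proof (rule slice_zero_imp[OF x p0])
  fix j assume j: "j < N"
  let ?f = "\<lambda>i j. if i = j then D else 0\<^sub>m p m"
  have f: "\<And>i j. ?f i j \<in> carrier_mat p m" using D by auto
  have T: "transpose_mat (DN m p N D) = block_mat m p N N (\<lambda>j i. transpose_mat (?f i j))"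
    unfolding DN_def by (rule block_transpose[OF f p0 m0])
  have ft: "\<And>i j. transpose_mat (?f i j) \<in> carrier_mat m p" using D by auto
  define y where "y = slice p j x"
  have y: "y \<in> carrier_vec p" unfolding y_def by simp
  have Dy: "transpose_mat D *\<^sub>v y = 0\<^sub>v m"
  proof (rule eq_vecI)
    show "dim_vec (transpose_mat D *\<^sub>v y) = dim_vec (0\<^sub>v m)" using D by simp
    fix b assume "b < dim_vec (0\<^sub>v m)"
    then have b: "b < m" by simp
    have jb: "j*m + b < m*N"
    proof -
      have "j*m + b < (j+1)*m" using b by simp
      also have "\<dots> \<le> N*m" using j by (intro mult_le_mono1) simp
      finally show ?thesis by (simp add: mult.commute)
    qed
    have "(transpose_mat (DN m p N D) *\<^sub>v x) $ (j*m + b)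
        = (\<Sum>i<N. (transpose_mat (?f i j) *\<^sub>v slice p i x) $ b)"
      unfolding T by (rule block_mult_vec[OF ft _ j b]) (use x in \<open>simp add: mult.commute\<close>)
    also have "\<dots> = (\<Sum>i<N. if i = j then (transpose_mat D *\<^sub>v y) $ b else 0)"
      by (rule sum.cong) (use b D in \<open>auto simp: y_def\<close>)
    also have "\<dots> = (transpose_mat D *\<^sub>v y) $ b" using j by simp
    finally show "(transpose_mat D *\<^sub>v y) $ b = 0\<^sub>v m $ b" using z jb b by simp
  qed
  have "y \<bullet> ((D * transpose_mat D) *\<^sub>v y) = 0"
    using gram_quad[OF D y] Dy by simp
  then have "y = 0\<^sub>v p" using DD y D unfolding pd_mat_def by force
  then show "slice p j x = 0\<^sub>v p" unfolding y_def .
qed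

lemma ON_kernel:
  assumes x: "x \<in> carrier_vec n" and z: "ON n p N A C *\<^sub>v x = 0\<^sub>v (p*N)"
  shows "x = 0\<^sub>v n"
proof -
  have CA: "\<And>k. C * A ^\<^sub>m k \<in> carrier_mat p n" using A C by auto
  have zk: "(C * A ^\<^sub>m k) *\<^sub>v x = 0\<^sub>v p" if k: "k < N" for k
  proof (rule eq_vecI)
    show "dim_vec ((C * A ^\<^sub>m k) *\<^sub>v x) = dim_vec (0\<^sub>v p)" using C by simp
    fix a assume "a < dim_vec (0\<^sub>v p)" then have a: "a < p" by simp
    define i where "i = N - 1 - k"
    have i: "i < N" and ki: "N - 1 - i = k" using k N0 unfolding i_def by auto
    have "(ON n p N A C *\<^sub>v x) $ (i*p+a) = ((C * A ^\<^sub>m (N - 1 - i)) *\<^sub>v x) $ a"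
      unfolding ON_def by (rule colblock) (use CA x i a in auto)
    moreover have "i*p + a < p*N" using idx_bound[OF i a] .
    ultimately show "((C * A ^\<^sub>m k) *\<^sub>v x) $ a = 0\<^sub>v p $ a" using z ki a by simp
  qed
  let ?O = "block_mat n (dim_col (transpose_mat C)) 1 n (\<lambda>_ j. (transpose_mat A ^\<^sub>m j) * transpose_mat C)"
  have dc: "dim_col (transpose_mat C) = p" using C by simp
  have Ocar: "?O \<in> carrier_mat n (p*n)" unfolding block_mat_def dc by simp
  have rk: "vec_space.rank n ?O = n" using obs unfolding observable_def reachable_def by simp
  show ?thesis
  proof (rule rank_full_kernel[OF Ocar rk x])
    fix t assume t: "t < p*n"
    note d = index_decomp[OF t]
    have F: "\<And>j. j < n \<Longrightarrow> (transpose_mat A ^\<^sub>m j) * transpose_mat C \<in> carrier_mat n p" using A C by auto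
    have "col ?O t \<bullet> x = (transpose_mat ?O *\<^sub>v x) $ t" using Ocar t by simp
    also have "\<dots> = (transpose_mat ?O *\<^sub>v x) $ ((t div p)*p + t mod p)" using d(1) by simp
    also have "\<dots> = (transpose_mat ((transpose_mat A ^\<^sub>m (t div p)) * transpose_mat C) *\<^sub>v x) $ (t mod p)"
      unfolding dc by (rule rowblock_T[OF F n0 p0 x d(2) d(3)])
    also have "transpose_mat ((transpose_mat A ^\<^sub>m (t div p)) * transpose_mat C) = C * A ^\<^sub>m (t div p)"
    proof -
      have "transpose_mat ((transpose_mat A ^\<^sub>m (t div p)) * transpose_mat C)
          = transpose_mat (transpose_mat C) * transpose_mat (transpose_mat A ^\<^sub>m (t div p))"
        by (rule transpose_mult) (use A C in auto)
      also have "\<dots> = C * A ^\<^sub>m (t div p)" using transpose_pow[of "transpose_mat A" n "t div p"] A by simp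
      finally show ?thesis .
    qed
    also have "((C * A ^\<^sub>m (t div p)) *\<^sub>v x) $ (t mod p) = 0"
      using zk[of "t div p"] d Nn by simp
    finally show "col ?O t \<bullet> x = 0" .
  qed
qed

lemma RN_kernel:
  assumes x: "x \<in> carrier_vec n" and z: "transpose_mat (RN n m N A B) *\<^sub>v x = 0\<^sub>v (m*N)"
  shows "x = 0\<^sub>v n"
proof -
  have F: "\<And>j. A ^\<^sub>m j * B \<in> carrier_mat n m" using A B by auto
  let ?R = "block_mat n (dim_col B) 1 n (\<lambda>_ j. A ^\<^sub>m j * B)"
  have dc: "dim_col B = m" using B by simp
  have Rcar: "?R \<in> carrier_mat n (m*n)" unfolding block_mat_def dc by simp
  have rk: "vec_space.rank n ?R = n" using reach unfolding reachable_def by simp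
  show ?thesis
  proof (rule rank_full_kernel[OF Rcar rk x])
    fix t assume t: "t < m*n"
    note d = index_decomp[OF t]
    have jN: "t div m < N" using d(2) Nn by simp
    have "col ?R t \<bullet> x = (transpose_mat ?R *\<^sub>v x) $ t" using Rcar t by simp
    also have "\<dots> = (transpose_mat ?R *\<^sub>v x) $ ((t div m)*m + t mod m)" using d(1) by simp
    also have "\<dots> = (transpose_mat (A ^\<^sub>m (t div m) * B) *\<^sub>v x) $ (t mod m)"
      unfolding dc by (rule rowblock_T[OF F n0 m0 x d(2) d(3)])
    also have "\<dots> = (transpose_mat (RN n m N A B) *\<^sub>v x) $ ((t div m)*m + t mod m)"
      unfolding RN_def by (rule rowblock_T[OF F n0 m0 x jN d(3), symmetric])
    also have "\<dots> = 0" using z idx_bound[OF jN d(3)] by simp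
    finally show "col ?R t \<bullet> x = 0" .
  qed
qed

end


lemma smult_one_vec: fixes x :: "real vec"
  assumes x: "x \<in> carrier_vec k" shows "(a \<cdot>\<^sub>m 1\<^sub>m k) *\<^sub>v x = a \<cdot>\<^sub>v x"
proof (rule eq_vecI)
  show "dim_vec ((a \<cdot>\<^sub>m 1\<^sub>m k) *\<^sub>v x) = dim_vec (a \<cdot>\<^sub>v x)" using x by simp
  fix i assume "i < dim_vec (a \<cdot>\<^sub>v x)" then have i: "i < k" using x by simp
  have "row (a \<cdot>\<^sub>m 1\<^sub>m k) i = a \<cdot>\<^sub>v unit_vec k i"
    by (rule eq_vecI) (use i in \<open>auto simp: unit_vec_def\<close>)
  then show "((a \<cdot>\<^sub>m 1\<^sub>m k) *\<^sub>v x) $ i = (a \<cdot>\<^sub>v x) $ i"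
    using i x comm_scalar_prod[of "unit_vec k i" k x] by (simp add: scalar_prod_right_unit)
qed

lemma psd_bound_phi: fixes Phi :: "real mat"
  assumes P: "Phi \<in> carrier_mat k k" and ps: "psd_mat (phi \<cdot>\<^sub>m 1\<^sub>m k - Phi)" and x: "x \<in> carrier_vec k"
  shows "x \<bullet> (Phi *\<^sub>v x) \<le> phi * (x \<bullet> x)"
proof -
  have c: "phi \<cdot>\<^sub>m 1\<^sub>m k \<in> carrier_mat k k" by simp
  have "0 \<le> x \<bullet> ((phi \<cdot>\<^sub>m 1\<^sub>m k - Phi) *\<^sub>v x)" using ps x P unfolding psd_mat_def by auto
  also have "\<dots> = phi * (x \<bullet> x) - x \<bullet> (Phi *\<^sub>v x)"
    using quad_minus[OF c P x] smult_one_vec[OF x] x by simp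
  finally show ?thesis by simp
qed


lemma sym_trick: fixes T Ti Phi U Ui :: "real mat"
  assumes c: "T \<in> carrier_mat k k" "Ti \<in> carrier_mat k k" "Phi \<in> carrier_mat k k"
    "U \<in> carrier_mat k k" "Ui \<in> carrier_mat k k"
    and TiT: "Ti * T = 1\<^sub>m k" and UUi: "U * Ui = 1\<^sub>m k" and E: "T * Phi = Phi * U"
  shows "Ti * Phi = Phi * Ui"
proof -
  have "Ti * Phi = (Ti * Phi) * (U * Ui)" using UUi c by simp
  also have "\<dots> = Ti * ((Phi * U) * Ui)" using c by (simp add: assoc_mult_mat[of _ k k _ k _ k])
  also have "\<dots> = Ti * ((T * Phi) * Ui)" using E by simp
  also have "\<dots> = (Ti * T) * (Phi * Ui)" using c by (simp add: assoc_mult_mat[of _ k k _ k _ k])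
  also have "\<dots> = Phi * Ui" using TiT c by simp
  finally show ?thesis .
qed


context
  fixes n m p N :: nat and A B C D :: "real mat"
  assumes n0: "n > 0" and m0: "m > 0" and p0: "p > 0"
    and A: "A \<in> carrier_mat n n" and B: "B \<in> carrier_mat n m" and C: "C \<in> carrier_mat p n"
    and D: "D \<in> carrier_mat p m"
    and DD: "pd_mat (D * transpose_mat D)"
    and reach: "reachable n A B" and obs: "observable n A C" and Nn: "N \<ge> n"
begin

lemma minus_carrier_mat': "A \<in> carrier_mat r c \<Longrightarrow> B \<in> carrier_mat r c \<Longrightarrow> A - B \<in> carrier_mat r c"
  by (rule minus_carrier_mat)

lemma vec_minus_zero: fixes a b :: "real vec"
  assumes "a \<in> carrier_vec k" "b \<in> carrier_vec k" "a - b = 0\<^sub>v k" shows "a = b"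
proof (rule eq_vecI)
  fix i assume "i < dim_vec b"
  then have i: "i < k" using assms by simp
  have "(a - b) $ i = 0" using assms i by simp
  moreover have "(a - b) $ i = a $ i - b $ i" using assms(2) i by (intro index_minus_vec(1)) auto
  ultimately show "a $ i = b $ i" by simp
qed (use assms in simp)

lemma vec_minus_eq: fixes a b c :: "real vec"
  assumes "a \<in> carrier_vec k" "b \<in> carrier_vec k" "c \<in> carrier_vec k" "a - b = c" shows "a = c + b"
proof (rule eq_vecI)
  fix i assume "i < dim_vec (c + b)"
  then have i: "i < k" using assms by simp
  have "(a - b) $ i = c $ i" using assms by simp
  moreover have "(a - b) $ i = a $ i - b $ i" using assms(2) i by (intro index_minus_vec(1)) auto
  ultimately show "a $ i = (c + b) $ i" using assms i by simp
qed (use assms in simp)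

lemmas asms = n0 m0 p0 A B C D DD reach obs Nn
lemmas car = carriers[OF asms]
lemmas DNk = DN_kernel[OF asms]
lemmas ONk = ON_kernel[OF asms]
lemmas RNk = RN_kernel[OF asms]

abbreviation "Dn \<equiv> DN m p N D"
abbreviation "Hn \<equiv> HN m p N A B C"
abbreviation "Ln \<equiv> LN n m N A B"
abbreviation "On \<equiv> ON n p N A C"
abbreviation "Rn \<equiv> RN n m N A B"
abbreviation "DDn \<equiv> Dn * transpose_mat Dn"
abbreviation "Xn \<equiv> DDn + Hn * transpose_mat Hn"
abbreviation "Gn \<equiv> 1\<^sub>m (N * m) + transpose_mat Hn * inv_mat DDn * Hn"
abbreviation "Mn \<equiv> Ln * inv_mat Gn * transpose_mat Ln"
abbreviation "Omn \<equiv> transpose_mat On * inv_mat Xn * On"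

lemma Nm: "N * m = m * N" by simp

lemma pdform_nonneg: fixes P :: "real mat"
  assumes P: "P \<in> carrier_mat k k" and pd: "\<forall>x\<in>carrier_vec k. x \<noteq> 0\<^sub>v k \<longrightarrow> 0 < x \<bullet> (P *\<^sub>v x)"
    and x: "x \<in> carrier_vec k"
  shows "0 \<le> x \<bullet> (P *\<^sub>v x)"
  using pd x by (cases "x = 0\<^sub>v k") (auto intro: less_imp_le simp: mat_vec_zero[OF P])

lemma DDn_props:
  "DDn \<in> carrier_mat (p*N) (p*N)" "transpose_mat DDn = DDn"
  "\<forall>x\<in>carrier_vec (p*N). x \<noteq> 0\<^sub>v (p*N) \<longrightarrow> 0 < x \<bullet> (DDn *\<^sub>v x)"
proof -
  show "DDn \<in> carrier_mat (p*N) (p*N)" using car by auto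
  show "transpose_mat DDn = DDn" using car by (simp add: transpose_mult[of _ "p*N" "m*N"])
  show "\<forall>x\<in>carrier_vec (p*N). x \<noteq> 0\<^sub>v (p*N) \<longrightarrow> 0 < x \<bullet> (DDn *\<^sub>v x)"
  proof (intro ballI impI)
    fix x :: "real vec" assume x: "x \<in> carrier_vec (p*N)" "x \<noteq> 0\<^sub>v (p*N)"
    have y: "transpose_mat Dn *\<^sub>v x \<in> carrier_vec (m*N)" using car x by auto
    have "transpose_mat Dn *\<^sub>v x \<noteq> 0\<^sub>v (m*N)" using DNk x by blast
    then have "(transpose_mat Dn *\<^sub>v x) \<bullet> (transpose_mat Dn *\<^sub>v x) \<noteq> 0"
      using sq_zero_vec[OF y] by blast
    then have "0 < (transpose_mat Dn *\<^sub>v x) \<bullet> (transpose_mat Dn *\<^sub>v x)"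
      using sq_nonneg_vec by (simp add: order_less_le)
    then show "0 < x \<bullet> (DDn *\<^sub>v x)" using gram_quad[OF car(1) x(1)] by simp
  qed
qed

lemma Xn_props:
  "Xn \<in> carrier_mat (p*N) (p*N)" "transpose_mat Xn = Xn"
  "\<forall>x\<in>carrier_vec (p*N). x \<noteq> 0\<^sub>v (p*N) \<longrightarrow> 0 < x \<bullet> (Xn *\<^sub>v x)"
proof -
  have H: "Hn * transpose_mat Hn \<in> carrier_mat (p*N) (p*N)" using car by auto
  show "Xn \<in> carrier_mat (p*N) (p*N)" using car by auto
  show "transpose_mat Xn = Xn" using car DDn_props(2)
    by (simp add: transpose_add[of _ "p*N" "p*N"] transpose_mult[of _ "p*N" "m*N"])
  show "\<forall>x\<in>carrier_vec (p*N). x \<noteq> 0\<^sub>v (p*N) \<longrightarrow> 0 < x \<bullet> (Xn *\<^sub>v x)"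
  proof (intro ballI impI)
    fix x :: "real vec" assume x: "x \<in> carrier_vec (p*N)" "x \<noteq> 0\<^sub>v (p*N)"
    have "0 < x \<bullet> (DDn *\<^sub>v x)" using DDn_props(3) x by auto
    moreover have "0 \<le> x \<bullet> ((Hn * transpose_mat Hn) *\<^sub>v x)"
      using gram_quad[OF car(2) x(1)] sq_nonneg_vec by simp
    ultimately show "0 < x \<bullet> (Xn *\<^sub>v x)" using quad_add[OF DDn_props(1) H x(1)] by simp
  qed
qed

lemmas DDi = pd_inv[OF DDn_props]
lemmas Xi = pd_inv[OF Xn_props]

lemma Gn_props:
  "Gn \<in> carrier_mat (m*N) (m*N)" "transpose_mat Gn = Gn"
  "\<forall>x\<in>carrier_vec (m*N). x \<bullet> x \<le> x \<bullet> (Gn *\<^sub>v x)"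
  "\<forall>x\<in>carrier_vec (m*N). x \<noteq> 0\<^sub>v (m*N) \<longrightarrow> 0 < x \<bullet> (Gn *\<^sub>v x)"
proof -
  have HT: "transpose_mat Hn \<in> carrier_mat (m*N) (p*N)" using car by auto
  have K: "transpose_mat Hn * inv_mat DDn * Hn \<in> carrier_mat (m*N) (m*N)" using car DDi by auto
  have I: "1\<^sub>m (N*m) \<in> carrier_mat (m*N) (m*N)" by (simp add: Nm)
  show G: "Gn \<in> carrier_mat (m*N) (m*N)" using K I by auto
  have "transpose_mat (transpose_mat Hn * inv_mat DDn * Hn) = transpose_mat Hn * inv_mat DDn * Hn"
    using transpose_congr[OF HT DDi(1)] DDi(2) by simp
  then show "transpose_mat Gn = Gn" using transpose_add[OF I K] by simp
  have ge: "x \<bullet> x \<le> x \<bullet> (Gn *\<^sub>v x)" if x: "x \<in> carrier_vec (m*N)" for x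
  proof -
    have "x \<bullet> ((transpose_mat Hn * inv_mat DDn * Hn) *\<^sub>v x) = (Hn *\<^sub>v x) \<bullet> (inv_mat DDn *\<^sub>v (Hn *\<^sub>v x))"
      using quad_congr[OF HT DDi(1) x] by simp
    also have "\<dots> \<ge> 0" by (rule pdform_nonneg[OF DDi(1) DDi(3)]) (use car x in auto)
    finally have "0 \<le> x \<bullet> ((transpose_mat Hn * inv_mat DDn * Hn) *\<^sub>v x)" .
    moreover have "x \<bullet> (1\<^sub>m (N*m) *\<^sub>v x) = x \<bullet> x" using x by (simp add: Nm)
    ultimately show ?thesis using quad_add[OF I K x] by simp
  qed
  then show "\<forall>x\<in>carrier_vec (m*N). x \<bullet> x \<le> x \<bullet> (Gn *\<^sub>v x)" by blast
  show "\<forall>x\<in>carrier_vec (m*N). x \<noteq> 0\<^sub>v (m*N) \<longrightarrow> 0 < x \<bullet> (Gn *\<^sub>v x)"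
  proof (intro ballI impI)
    fix x :: "real vec" assume x: "x \<in> carrier_vec (m*N)" "x \<noteq> 0\<^sub>v (m*N)"
    have "x \<bullet> x \<noteq> 0" using sq_zero_vec[OF x(1)] x(2) by blast
    then have "0 < x \<bullet> x" using sq_nonneg_vec by (simp add: order_less_le)
    then show "0 < x \<bullet> (Gn *\<^sub>v x)" using ge[OF x(1)] by simp
  qed
qed

lemmas Gi = pd_inv[OF Gn_props(1,2,4)]

lemma Mn_props:
  "Mn \<in> carrier_mat (n*N) (n*N)" "transpose_mat Mn = Mn"
  "\<forall>x\<in>carrier_vec (n*N). 0 \<le> x \<bullet> (Mn *\<^sub>v x)"
proof -
  show "Mn \<in> carrier_mat (n*N) (n*N)" using car Gi by auto
  show "transpose_mat Mn = Mn" using transpose_congr[OF car(3) Gi(1)] Gi(2) by simp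
  show "\<forall>x\<in>carrier_vec (n*N). 0 \<le> x \<bullet> (Mn *\<^sub>v x)"
  proof
    fix x :: "real vec" assume x: "x \<in> carrier_vec (n*N)"
    show "0 \<le> x \<bullet> (Mn *\<^sub>v x)" unfolding quad_congr[OF car(3) Gi(1) x]
      by (rule pdform_nonneg[OF Gi(1) Gi(3)]) (use car x in auto)
  qed
qed

lemma Omnprops:
  "Omn \<in> carrier_mat n n" "transpose_mat Omn = Omn"
  "\<forall>x\<in>carrier_vec n. x \<noteq> 0\<^sub>v n \<longrightarrow> 0 < x \<bullet> (Omn *\<^sub>v x)"
proof -
  have OT: "transpose_mat On \<in> carrier_mat n (p*N)" using car by auto
  show "Omn \<in> carrier_mat n n" using car Xi by auto
  show "transpose_mat Omn = Omn" using transpose_congr[OF OT Xi(1)] Xi(2) by simp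
  show "\<forall>x\<in>carrier_vec n. x \<noteq> 0\<^sub>v n \<longrightarrow> 0 < x \<bullet> (Omn *\<^sub>v x)"
  proof (intro ballI impI)
    fix x :: "real vec" assume x: "x \<in> carrier_vec n" "x \<noteq> 0\<^sub>v n"
    have "On *\<^sub>v x \<noteq> 0\<^sub>v (p*N)" using ONk x by blast
    moreover have "On *\<^sub>v x \<in> carrier_vec (p*N)" using car x by auto
    ultimately have "0 < (On *\<^sub>v x) \<bullet> (inv_mat Xn *\<^sub>v (On *\<^sub>v x))" using Xi(3) by blast
    then show "0 < x \<bullet> (Omn *\<^sub>v x)" using quad_congr[OF OT Xi(1) x(1)] by simp
  qed
qed

lemma sigma_nonneg: "0 \<le> sigma1 Mn"
proof -
  let ?P = "transpose_mat Mn * Mn"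
  let ?k = "n*N - 1"
  have nN: "n*N > 0" using n0 Nn by simp
  have k: "?k < n*N" using nN by simp
  let ?e = "unit_vec (n*N) ?k :: real vec"
  have e: "?e \<in> carrier_vec (n*N)" by simp
  have P: "?P \<in> carrier_mat (n*N) (n*N)" using Mn_props by auto
  have Le: "transpose_mat Ln *\<^sub>v ?e = 0\<^sub>v (m*N)"
  proof (rule eq_vecI)
    show "dim_vec (transpose_mat Ln *\<^sub>v ?e) = dim_vec (0\<^sub>v (m*N))" using car by simp
    fix j assume "j < dim_vec (0\<^sub>v (m*N))" then have j: "j < m*N" by simp
    have kd: "?k div n = N - 1"
    proof -
      have h: "n*N - 1 = (n-1) + (N-1)*n" using n0 Nn by (cases N) (auto simp: algebra_simps)
      have "((n-1) + (N-1)*n) div n = (N-1) + (n-1) div n" using n0 by (rule div_mult_self1[OF neq0_conv[THEN iffD2]])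
      then show ?thesis using h n0 by simp
    qed
    have jd: "j div m < N" using index_decomp(2)[OF j] .
    have "(transpose_mat Ln *\<^sub>v ?e) $ j = row (transpose_mat Ln) j \<bullet> ?e" using car j by simp
    also have "\<dots> = Ln $$ (?k, j)" using car j k by (simp add: scalar_prod_right_unit)
    also have "\<dots> = 0" unfolding LN_def block_mat_def using j k kd jd n0 m0 by auto
    finally show "(transpose_mat Ln *\<^sub>v ?e) $ j = 0\<^sub>v (m*N) $ j" using j by simp
  qed
  have Me: "Mn *\<^sub>v ?e = 0\<^sub>v (n*N)"
  proof -
    have "Mn *\<^sub>v ?e = (Ln * inv_mat Gn) *\<^sub>v (transpose_mat Ln *\<^sub>v ?e)"
      by (rule assoc_mult_mat_vec) (use car Gi in auto)
    also have "\<dots> = 0\<^sub>v (n*N)" unfolding Le using car Gi by simp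
    finally show ?thesis .
  qed
  have Pe: "?P *\<^sub>v ?e = 0 \<cdot>\<^sub>v ?e"
  proof -
    have "?P *\<^sub>v ?e = transpose_mat Mn *\<^sub>v (Mn *\<^sub>v ?e)"
      by (rule assoc_mult_mat_vec) (use Mn_props in auto)
    also have "\<dots> = 0\<^sub>v (n*N)" unfolding Me using Mn_props by simp
    finally show ?thesis by auto
  qed
  have ne: "?e \<noteq> 0\<^sub>v (n*N)"
  proof
    assume "?e = 0\<^sub>v (n*N)"
    then have "?e $ ?k = 0\<^sub>v (n*N) $ ?k" by (simp only:)
    then show False using k by simp
  qed
  have ev: "eigenvalue ?P 0"
    unfolding eigenvalue_def eigenvector_def
  proof (rule exI[of _ ?e])
    have "dim_row ?P = n*N" using P car by simp
    then show "?e \<in> carrier_vec (dim_row ?P) \<and> ?e \<noteq> 0\<^sub>v (dim_row ?P) \<and> ?P *\<^sub>v ?e = 0 \<cdot>\<^sub>v ?e"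
      using e Pe ne by simp
  qed
  have cp: "char_poly ?P \<noteq> 0" using degree_monic_char_poly[OF P] by auto
  have fin: "finite {k. eigenvalue ?P k}"
    using poly_roots_finite[OF cp] eigenvalue_root_char_poly[OF P] by simp
  have "0 \<le> Max {k. eigenvalue ?P k}" using Max_ge[OF fin] ev by fastforce
  then show ?thesis unfolding sigma1_def by simp
qed

lemma W_pd:
  assumes P: "Phi \<in> carrier_mat (n*N) (n*N)" and Ps: "transpose_mat Phi = Phi"
    and pb: "psd_mat (phi \<cdot>\<^sub>m 1\<^sub>m (n*N) - Phi)" and ph0: "0 \<le> phi" and ph1: "phi * fr Ln < 1"
  shows "pd_mat (W_Phi n m p N A B C D Phi)"
proof -
  let ?K = "transpose_mat Ln * Phi * Ln"
  let ?G = "Gn - ?K"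
  have LT: "transpose_mat Ln \<in> carrier_mat (m*N) (n*N)" using car by auto
  have K: "?K \<in> carrier_mat (m*N) (m*N)" using car P by auto
  have G: "?G \<in> carrier_mat (m*N) (m*N)" by (rule minus_carrier_mat[OF K])
  have KT: "transpose_mat ?K = ?K" using transpose_congr[OF LT P] Ps by simp
  have GT: "transpose_mat ?G = ?G" using transpose_minus[OF Gn_props(1) K] KT Gn_props(2) by simp
  have Gpd: "\<forall>x\<in>carrier_vec (m*N). x \<noteq> 0\<^sub>v (m*N) \<longrightarrow> 0 < x \<bullet> (?G *\<^sub>v x)"
  proof (intro ballI impI)
    fix x :: "real vec" assume x: "x \<in> carrier_vec (m*N)" "x \<noteq> 0\<^sub>v (m*N)"
    have "x \<bullet> x \<noteq> 0" using sq_zero_vec[OF x(1)] x(2) by blast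
    then have xx: "0 < x \<bullet> x" using sq_nonneg_vec by (simp add: order_less_le)
    have Lx: "Ln *\<^sub>v x \<in> carrier_vec (n*N)" using car x by auto
    have "x \<bullet> (?K *\<^sub>v x) = (Ln *\<^sub>v x) \<bullet> (Phi *\<^sub>v (Ln *\<^sub>v x))"
      using quad_congr[OF LT P x(1)] by simp
    also have "\<dots> \<le> phi * ((Ln *\<^sub>v x) \<bullet> (Ln *\<^sub>v x))" by (rule psd_bound_phi[OF P pb Lx])
    also have "\<dots> \<le> phi * (fr Ln * (x \<bullet> x))"
      by (rule mult_left_mono[OF fr_bound ph0]) (use car x in auto)
    finally have "x \<bullet> (?K *\<^sub>v x) \<le> (phi * fr Ln) * (x \<bullet> x)" by (simp add: algebra_simps)
    moreover have "x \<bullet> x \<le> x \<bullet> (Gn *\<^sub>v x)" using Gn_props(3) x by auto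
    moreover have "(phi * fr Ln) * (x \<bullet> x) < x \<bullet> x" using ph1 xx by simp
    ultimately show "0 < x \<bullet> (?G *\<^sub>v x)" using quad_minus[OF Gn_props(1) K x(1)] by linarith
  qed
  note Q = pd_inv[OF G GT Gpd]
  have R: "Rn \<in> carrier_mat n (m*N)" using car by auto
  have "W_Phi n m p N A B C D Phi = Rn * inv_mat ?G * transpose_mat Rn"
    unfolding W_Phi_def Q_Phi_def by simp
  moreover have "pd_mat (Rn * inv_mat ?G * transpose_mat Rn)"
  proof (rule pd_matI)
    show "Rn * inv_mat ?G * transpose_mat Rn \<in> carrier_mat n n" using R Q by auto
    show "transpose_mat (Rn * inv_mat ?G * transpose_mat Rn) = Rn * inv_mat ?G * transpose_mat Rn"
      using transpose_congr[OF R Q(1)] Q(2) by simp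
    show "\<forall>x\<in>carrier_vec n. x \<noteq> 0\<^sub>v n \<longrightarrow> 0 < x \<bullet> ((Rn * inv_mat ?G * transpose_mat Rn) *\<^sub>v x)"
    proof (intro ballI impI)
      fix x :: "real vec" assume x: "x \<in> carrier_vec n" "x \<noteq> 0\<^sub>v n"
      have "transpose_mat Rn *\<^sub>v x \<noteq> 0\<^sub>v (m*N)" using RNk x by blast
      moreover have "transpose_mat Rn *\<^sub>v x \<in> carrier_vec (m*N)" using R x by auto
      ultimately show "0 < x \<bullet> ((Rn * inv_mat ?G * transpose_mat Rn) *\<^sub>v x)"
        using quad_congr[OF R Q(1) x(1)] Q(3) by simp
    qed
  qed
  ultimately show ?thesis by simp
qed

abbreviation "Jn \<equiv> ONR n N A - Ln * transpose_mat Hn * inv_mat Xn * On"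

lemma Jn_car: "Jn \<in> carrier_mat (n*N) n"
  by (rule minus_carrier_mat) (use car Xi in auto)

lemma Om_pd:
  assumes P: "Phi \<in> carrier_mat (n*N) (n*N)" and Ps: "transpose_mat Phi = Phi"
    and pp: "psd_mat Phi" and pb: "psd_mat (phi \<cdot>\<^sub>m 1\<^sub>m (n*N) - Phi)" and ph0: "0 \<le> phi"
    and ph2: "2 * fr Mn * phi^2 \<le> 1/2"
    and mu: "\<forall>x\<in>carrier_vec n. mu * (x \<bullet> x) \<le> x \<bullet> (Omn *\<^sub>v x)" and ph3: "4 * phi * fr Jn < mu"
  shows "pd_mat (Omega_Phi n m p N A B C D Phi)"
proof -
  define k where "k = n*N"
  have Pk: "Phi \<in> carrier_mat k k" using P k_def by simp
  have Mc: "Mn \<in> carrier_mat k k" using Mn_props k_def by simp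
  have FM0: "0 \<le> fr Mn" by (rule fr_nonneg)
  have Ppsd: "\<forall>x\<in>carrier_vec k. 0 \<le> x \<bullet> (Phi *\<^sub>v x)" using pp Pk unfolding psd_mat_def by auto
  have Pb: "\<forall>x\<in>carrier_vec k. x \<bullet> (Phi *\<^sub>v x) \<le> phi * (x \<bullet> x)"
    using psd_bound_phi[OF P pb] k_def by simp
  have Psq: "(Phi *\<^sub>v w) \<bullet> (Phi *\<^sub>v w) \<le> phi * phi * (w \<bullet> w)" if w: "w \<in> carrier_vec k" for w
  proof -
    have "(Phi *\<^sub>v w) \<bullet> (Phi *\<^sub>v w) \<le> phi * (w \<bullet> (Phi *\<^sub>v w))"
      by (rule psd_sq_bound[OF Pk Ps Ppsd Pb ph0 w])
    also have "\<dots> \<le> phi * (phi * (w \<bullet> w))" using Pb w ph0 by (simp add: mult_left_mono)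
    finally show ?thesis by (simp add: algebra_simps)
  qed
  have Mb: "(Mn *\<^sub>v v) \<bullet> (Mn *\<^sub>v v) \<le> fr Mn * (v \<bullet> v)" if v: "v \<in> carrier_vec k" for v
    by (rule fr_bound) (use v Mc in auto)
  have q14: "phi * phi * fr Mn \<le> 1/4" using ph2 by (simp add: power2_eq_square algebra_simps)
  define T where "T = 1\<^sub>m k - Phi * Mn"
  have PM: "Phi * Mn \<in> carrier_mat k k" using Pk Mc by auto
  have Tc: "T \<in> carrier_mat k k" unfolding T_def by (rule minus_carrier_mat[OF PM])
  have Tv: "T *\<^sub>v v = v - Phi *\<^sub>v (Mn *\<^sub>v v)" if v: "v \<in> carrier_vec k" for v
  proof -
    have "T *\<^sub>v v = 1\<^sub>m k *\<^sub>v v - (Phi * Mn) *\<^sub>v v"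
      unfolding T_def by (rule minus_mult_distrib_mat_vec[OF one_carrier_mat PM v])
    also have "(Phi * Mn) *\<^sub>v v = Phi *\<^sub>v (Mn *\<^sub>v v)" by (rule assoc_mult_mat_vec[OF Pk Mc v])
    finally show ?thesis using v by simp
  qed
  have ker: "v = 0\<^sub>v k" if v: "v \<in> carrier_vec k" "T *\<^sub>v v = 0\<^sub>v k" for v
  proof -
    have Mv: "Mn *\<^sub>v v \<in> carrier_vec k" using Mc v by auto
    have "v - Phi *\<^sub>v (Mn *\<^sub>v v) = 0\<^sub>v k" using Tv v by simp
    then have veq: "v = Phi *\<^sub>v (Mn *\<^sub>v v)" using vec_minus_zero[of v k "Phi *\<^sub>v (Mn *\<^sub>v v)"] v Pk Mv by simp
    have "v \<bullet> v \<le> phi * phi * ((Mn *\<^sub>v v) \<bullet> (Mn *\<^sub>v v))" using Psq[OF Mv] veq by simp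
    also have "\<dots> \<le> phi * phi * (fr Mn * (v \<bullet> v))" by (rule mult_left_mono[OF Mb[OF v(1)]]) simp
    also have "\<dots> = (phi * phi * fr Mn) * (v \<bullet> v)" by simp
    also have "\<dots> \<le> (1/4) * (v \<bullet> v)" by (rule mult_right_mono[OF q14 sq_nonneg_vec])
    finally have "v \<bullet> v \<le> (1/4) * (v \<bullet> v)" .
    then have "v \<bullet> v = 0" using sq_nonneg_vec[of v] by linarith
    then show ?thesis using sq_zero_vec[OF v(1)] by simp
  qed
  define Ti where "Ti = inv_mat T"
  have TI: "Ti \<in> carrier_mat k k" "T * Ti = 1\<^sub>m k" "Ti * T = 1\<^sub>m k"
    using inv_mat_props[OF Tc ker] Ti_def by auto
  have UT: "transpose_mat T = 1\<^sub>m k - Mn * Phi"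
    unfolding T_def using transpose_minus[OF one_carrier_mat PM] transpose_mult[OF Pk Mc] Ps Mn_props(2)
    by simp
  have E: "T * Phi = Phi * transpose_mat T"
  proof -
    have MP: "Mn * Phi \<in> carrier_mat k k" using Pk Mc by auto
    have "T * Phi = 1\<^sub>m k * Phi - (Phi * Mn) * Phi"
      unfolding T_def by (rule minus_mult_distrib_mat[OF one_carrier_mat PM Pk])
    also have "\<dots> = Phi - Phi * (Mn * Phi)" using Pk Mc by (simp add: assoc_mult_mat[OF Pk Mc Pk])
    also have "\<dots> = Phi * 1\<^sub>m k - Phi * (Mn * Phi)" using Pk by simp
    also have "\<dots> = Phi * (1\<^sub>m k - Mn * Phi)"
      by (rule mult_minus_distrib_mat[OF Pk one_carrier_mat MP, symmetric])
    finally show ?thesis unfolding UT .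
  qed
  have UU: "transpose_mat T * transpose_mat Ti = 1\<^sub>m k"
    using transpose_mult[OF TI(1) Tc] TI(3) by simp
  have sw: "Ti * Phi = Phi * transpose_mat Ti"
    by (rule sym_trick[OF Tc TI(1) Pk _ _ TI(3) UU E]) (use Tc TI in auto)
  have TPs: "transpose_mat (Ti * Phi) = Ti * Phi"
    using transpose_mult[OF TI(1) Pk] Ps sw by simp
  define S where "S = - (Ti * Phi)"
  have Sc: "S \<in> carrier_mat k k" unfolding S_def using TI Pk by auto
  have ST: "transpose_mat S = S" unfolding S_def using TPs by (simp add: transpose_uminus)
  have quadS: "- (4 * phi * (y \<bullet> y)) \<le> y \<bullet> (S *\<^sub>v y)" if y: "y \<in> carrier_vec k" for y
  proof -
    define z where "z = Ti *\<^sub>v (Phi *\<^sub>v y)"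
    have Py: "Phi *\<^sub>v y \<in> carrier_vec k" using Pk y by auto
    have z: "z \<in> carrier_vec k" unfolding z_def using TI Py by auto
    have Mz: "Mn *\<^sub>v z \<in> carrier_vec k" using Mc z by auto
    have Sy: "S *\<^sub>v y = - z"
    proof -
      have "S *\<^sub>v y = - ((Ti * Phi) *\<^sub>v y)" unfolding S_def using y TI Pk by simp
      also have "(Ti * Phi) *\<^sub>v y = z" unfolding z_def by (rule assoc_mult_mat_vec[OF TI(1) Pk y])
      finally show ?thesis .
    qed
    have yS: "y \<bullet> (S *\<^sub>v y) = - (y \<bullet> z)" unfolding Sy using y z by simp
    have Tz: "T *\<^sub>v z = Phi *\<^sub>v y"
    proof -
      have "T *\<^sub>v z = (T * Ti) *\<^sub>v (Phi *\<^sub>v y)" unfolding z_def by (rule assoc_mult_mat_vec[OF Tc TI(1) Py, symmetric])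
      then show ?thesis using TI Py by simp
    qed
    define w where "w = y + Mn *\<^sub>v z"
    have w: "w \<in> carrier_vec k" unfolding w_def using y Mz by auto
    have zw: "z = Phi *\<^sub>v w"
    proof -
      have "z - Phi *\<^sub>v (Mn *\<^sub>v z) = Phi *\<^sub>v y" using Tv[OF z] Tz by simp
      then have "z = Phi *\<^sub>v y + Phi *\<^sub>v (Mn *\<^sub>v z)"
        using vec_minus_eq[of z k "Phi *\<^sub>v (Mn *\<^sub>v z)" "Phi *\<^sub>v y"] z Pk Mz Py by simp
      also have "\<dots> = Phi *\<^sub>v w" unfolding w_def by (rule mult_add_distrib_mat_vec[OF Pk y Mz, symmetric])
      finally show ?thesis .
    qed
    have "w \<bullet> z = y \<bullet> z + (Mn *\<^sub>v z) \<bullet> z" unfolding w_def by (rule add_scalar_prod_distrib[OF y Mz z])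
    moreover have "(Mn *\<^sub>v z) \<bullet> z \<ge> 0"
      using Mn_props(3) z comm_scalar_prod[OF Mz z] k_def by simp
    ultimately have "y \<bullet> z \<le> w \<bullet> (Phi *\<^sub>v w)" using zw by simp
    also have "\<dots> \<le> phi * (w \<bullet> w)" using Pb w by simp
    finally have yz: "y \<bullet> z \<le> phi * (w \<bullet> w)" .
    have "w \<bullet> w \<le> 2 * (y \<bullet> y) + 2 * ((Mn *\<^sub>v z) \<bullet> (Mn *\<^sub>v z))"
      unfolding w_def by (rule sum_sq_bound[OF y Mz])
    also have "(Mn *\<^sub>v z) \<bullet> (Mn *\<^sub>v z) \<le> fr Mn * (z \<bullet> z)" by (rule Mb[OF z])
    also have "z \<bullet> z \<le> phi * phi * (w \<bullet> w)" using Psq[OF w] zw by simp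
    finally have "w \<bullet> w \<le> 2 * (y \<bullet> y) + 2 * (fr Mn * (phi * phi * (w \<bullet> w)))"
      using FM0 by (simp add: mult_left_mono)
    moreover have "2 * (fr Mn * (phi * phi * (w \<bullet> w))) \<le> (1/2) * (w \<bullet> w)"
      using mult_right_mono[OF ph2 sq_nonneg_vec[of w]] by (simp add: power2_eq_square algebra_simps)
    ultimately have "w \<bullet> w \<le> 4 * (y \<bullet> y)" by linarith
    then have "phi * (w \<bullet> w) \<le> phi * (4 * (y \<bullet> y))" using ph0 by (simp add: mult_left_mono)
    with yz yS show ?thesis by (simp add: algebra_simps)
  qed
  have JT: "transpose_mat Jn \<in> carrier_mat n k" using Jn_car k_def by simp
  define Om where "Om = Omn + transpose_mat Jn * S * Jn"
  have eq: "Omega_Phi n m p N A B C D Phi = Om"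
    unfolding Om_def S_def Ti_def T_def k_def Omega_Phi_def S_inv_def OmegaN_def JN_def MN_def by simp
  have K2: "transpose_mat Jn * S * Jn \<in> carrier_mat n n" using JT Sc Jn_car k_def by auto
  have Omc: "Om \<in> carrier_mat n n" unfolding Om_def using Omnprops(1) K2 by auto
  have K2T: "transpose_mat (transpose_mat Jn * S * Jn) = transpose_mat Jn * S * Jn"
    using transpose_congr[OF JT Sc] ST by simp
  have OmT: "transpose_mat Om = Om" unfolding Om_def
    using transpose_add[OF Omnprops(1) K2] K2T Omnprops(2) by simp
  have "pd_mat Om"
  proof (rule pd_matI[OF Omc OmT], intro ballI impI)
    fix x :: "real vec" assume x: "x \<in> carrier_vec n" "x \<noteq> 0\<^sub>v n"
    have "x \<bullet> x \<noteq> 0" using sq_zero_vec[OF x(1)] x(2) by blast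
    then have xx: "0 < x \<bullet> x" using sq_nonneg_vec by (simp add: order_less_le)
    have Jx: "Jn *\<^sub>v x \<in> carrier_vec k" using Jn_car x k_def by auto
    have "x \<bullet> ((transpose_mat Jn * S * Jn) *\<^sub>v x) = (Jn *\<^sub>v x) \<bullet> (S *\<^sub>v (Jn *\<^sub>v x))"
      using quad_congr[OF JT Sc x(1)] by simp
    also have "\<dots> \<ge> - (4 * phi * ((Jn *\<^sub>v x) \<bullet> (Jn *\<^sub>v x)))" by (rule quadS[OF Jx])
    finally have a: "- (4 * phi * ((Jn *\<^sub>v x) \<bullet> (Jn *\<^sub>v x))) \<le> x \<bullet> ((transpose_mat Jn * S * Jn) *\<^sub>v x)" .
    have "(Jn *\<^sub>v x) \<bullet> (Jn *\<^sub>v x) \<le> fr Jn * (x \<bullet> x)" by (rule fr_bound) (use x Jn_car in auto)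
    then have b: "4 * phi * ((Jn *\<^sub>v x) \<bullet> (Jn *\<^sub>v x)) \<le> (4 * phi * fr Jn) * (x \<bullet> x)"
      using ph0 by (simp add: mult_left_mono algebra_simps)
    have c: "(4 * phi * fr Jn) * (x \<bullet> x) < mu * (x \<bullet> x)" using ph3 xx by simp
    have d: "mu * (x \<bullet> x) \<le> x \<bullet> (Omn *\<^sub>v x)" using mu x by auto
    show "0 < x \<bullet> (Om *\<^sub>v x)" unfolding Om_def using quad_add[OF Omnprops(1) K2 x(1)] a b c d by linarith
  qed
  then show ?thesis using eq by simp
qed

end


lemma r1: fixes F phi :: real assumes "0 \<le> F" "0 \<le> phi" "phi \<le> 1/(2*(F+1))" shows "phi * F < 1"
proof -
  have "phi * F \<le> (1/(2*(F+1))) * F" by (rule mult_right_mono) (use assms in auto)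
  also have "\<dots> < 1" using assms(1) by (simp add: field_simps)
  finally show ?thesis .
qed

lemma r2: fixes F phi :: real assumes "0 \<le> F" "0 \<le> phi" "phi \<le> 1/(2*(F+1))" shows "2 * F * phi^2 \<le> 1/2"
proof -
  have a: "phi * F \<le> 1/2"
  proof -
    have "phi * F \<le> (1/(2*(F+1))) * F" by (rule mult_right_mono) (use assms in auto)
    also have "\<dots> \<le> 1/2" using assms(1) by (simp add: field_simps)
    finally show ?thesis .
  qed
  have b: "phi \<le> 1/2"
  proof -
    have "1/(2*(F+1)) \<le> 1/2" using assms(1) by (simp add: field_simps)
    then show ?thesis using assms(3) by linarith
  qed
  have "(phi * F) * phi \<le> (1/2) * (1/2)" by (rule mult_mono) (use a b assms in auto)
  then show ?thesis by (simp add: power2_eq_square algebra_simps)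
qed

lemma r3: fixes F phi mu :: real assumes "0 \<le> F" "0 \<le> phi" "0 < mu" "phi \<le> mu/(8*(F+1))"
  shows "4 * phi * F < mu"
proof -
  have "phi * F \<le> (mu/(8*(F+1))) * F" by (rule mult_right_mono) (use assms in auto)
  then have "4 * phi * F \<le> 4 * (mu/(8*(F+1))) * F" by simp
  also have "\<dots> < mu" using assms(1,3) by (simp add: field_simps add_pos_nonneg)
  finally show ?thesis .
qed

lemma r4: fixes s phi :: real assumes "0 < s" "0 < phi" "phi \<le> 1/(s+1)" shows "phi < 1/s"
proof -
  have "1/(s+1) < 1/s" using assms(1) by (simp add: field_simps)
  then show ?thesis using assms by linarith
qed

context
  fixes n m p N :: nat and A B C D :: "real mat"
  assumes n0: "n > 0" and m0: "m > 0" and p0: "p > 0"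
    and A: "A \<in> carrier_mat n n" and B: "B \<in> carrier_mat n m" and C: "C \<in> carrier_mat p n"
    and D: "D \<in> carrier_mat p m"
    and DD: "pd_mat (D * transpose_mat D)"
    and reach: "reachable n A B" and obs: "observable n A C" and Nn: "N \<ge> n"
begin

lemmas asms2 = n0 m0 p0 A B C D DD reach obs Nn

lemma main_ctx:
  shows "\<exists>phiN :: real. 0 < phiN \<and> ereal phiN < phi_tilde n m p N A B C D \<and>
           (\<forall>Phi \<in> carrier_mat (n * N) (n * N).
              sym_mat Phi \<and> psd_mat Phi \<and> psd_mat (phiN \<cdot>\<^sub>m 1\<^sub>m (n * N) - Phi) \<longrightarrow>
                pd_mat (Omega_Phi n m p N A B C D Phi) \<and> pd_mat (W_Phi n m p N A B C D Phi))"
proof -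
  note OP = Omnprops[OF asms2]
  obtain mu where mu0: "mu > 0" and mu: "\<forall>x\<in>carrier_vec n. mu * (x \<bullet> x) \<le> x \<bullet> (Omn n m p N A B C D *\<^sub>v x)"
    using pd_lower[OF OP] by blast
  define FL where "FL = fr (LN n m N A B)"
  define FM where "FM = fr (Mn n m p N A B C D)"
  define FJ where "FJ = fr (Jn n m p N A B C D)"
  define s where "s = sigma1 (MN n m p N A B C D)"
  have FL0: "0 \<le> FL" and FM0: "0 \<le> FM" and FJ0: "0 \<le> FJ" unfolding FL_def FM_def FJ_def by (rule fr_nonneg)+
  have s0: "0 \<le> s" unfolding s_def MN_def using sigma_nonneg[OF asms2] by simp
  define phi where "phi = min (min (1/(2*(FL+1))) (1/(2*(FM+1)))) (min (mu/(8*(FJ+1))) (1/(s+1)))"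
  have phi0: "0 < phi" unfolding phi_def using FL0 FM0 FJ0 s0 mu0 by simp
  have p1: "phi \<le> 1/(2*(FL+1))" and p2: "phi \<le> 1/(2*(FM+1))" and p3: "phi \<le> mu/(8*(FJ+1))"
    and p4: "phi \<le> 1/(s+1)" unfolding phi_def by auto
  have c1: "phi * FL < 1" using r1[OF FL0 _ p1] phi0 by simp
  have c2: "2 * FM * phi^2 \<le> 1/2" using r2[OF FM0 _ p2] phi0 by simp
  have c3: "4 * phi * FJ < mu" using r3[OF FJ0 _ mu0 p3] phi0 by simp
  have c4: "ereal phi < phi_tilde n m p N A B C D"
  proof (cases "s = 0")
    case True then show ?thesis unfolding phi_tilde_def s_def[symmetric] by simp
  next
    case False
    then have "phi < 1/s" using r4[OF _ phi0 p4] s0 by simp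
    then show ?thesis using False unfolding phi_tilde_def s_def[symmetric] by simp
  qed
  show ?thesis
  proof (intro exI[of _ phi] conjI phi0 c4 ballI impI)
    fix Phi assume P: "Phi \<in> carrier_mat (n*N) (n*N)"
      and h: "sym_mat Phi \<and> psd_mat Phi \<and> psd_mat (phi \<cdot>\<^sub>m 1\<^sub>m (n * N) - Phi)"
    have Ps: "transpose_mat Phi = Phi" using h unfolding sym_mat_def by simp
    show "pd_mat (Omega_Phi n m p N A B C D Phi)"
      by (rule Om_pd[OF asms2 P Ps]) (use h phi0 c2 mu c3 FM_def FJ_def in auto)
    show "pd_mat (W_Phi n m p N A B C D Phi)"
      by (rule W_pd[OF asms2 P Ps]) (use h phi0 c1 FL_def in auto)
  qed
qed

end

theorem proposition1:
  fixes n m p N :: nat and A B C D :: "real mat"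
  assumes "n > 0" "m > 0" "p > 0"
    and "A \<in> carrier_mat n n" "B \<in> carrier_mat n m" "C \<in> carrier_mat p n" "D \<in> carrier_mat p m"
    and "pd_mat (D * transpose_mat D)"
    and "B * transpose_mat D = 0\<^sub>m n p"
    and "reachable n A B" and "observable n A C"
    and "N \<ge> n"
  shows "\<exists>phiN :: real. 0 < phiN \<and> ereal phiN < phi_tilde n m p N A B C D \<and>
           (\<forall>Phi \<in> carrier_mat (n * N) (n * N).
              sym_mat Phi \<and> psd_mat Phi \<and> psd_mat (phiN \<cdot>\<^sub>m 1\<^sub>m (n * N) - Phi) \<longrightarrow>
                pd_mat (Omega_Phi n m p N A B C D Phi) \<and> pd_mat (W_Phi n m p N A B C D Phi))"
  by (rule main_ctx) (use assms in auto)


end
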